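(* Let $G$ and $H$ be finite simple graphs. If the strong product $G \boxtimes H$ is well-dominated, then $G$ and $H$ are both well-dominated.
   Context: A set $D$ of vertices of a graph is dominating if every vertex is in $D$ or adjacent to a vertex of $D$. A graph is well-dominated if every minimal (with respect to inclusion) dominating set is a minimum dominating set, i.e. $\gamma=\Gamma$ (smallest and largest size of a minimal dominating set). The strong product $G\boxtimes H$ has vertex set $V(G)\times V(H)$, with distinct $(g_1,h_1)$ and $(g_2,h_2)$ adjacent iff ($g_1=g_2$ and $h_1h_2\in E(H)$), or ($h_1=h_2$ and $g_1g_2\in E(G)$), or ($g_1g_2\in E(G)$ and $h_1h_2\in E(H)$). *)

theory Defs
  imports Main
begin

definition fin_simple_graph :: "'a set \<Rightarrow> ('a \<Rightarrow> 'a \<Rightarrow> bool) \<Rightarrow> bool" where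
  "fin_simple_graph V E \<longleftrightarrow> finite V \<and> (\<forall>x y. E x y \<longrightarrow> x \<in> V \<and> y \<in> V)
     \<and> (\<forall>x y. E x y \<longrightarrow> E y x) \<and> (\<forall>x. \<not> E x x)"

definition dominating :: "'a set \<Rightarrow> ('a \<Rightarrow> 'a \<Rightarrow> bool) \<Rightarrow> 'a set \<Rightarrow> bool" where
  "dominating V E D \<longleftrightarrow> D \<subseteq> V \<and> (\<forall>v\<in>V. v \<in> D \<or> (\<exists>u\<in>D. E v u))"

definition minimal_dominating :: "'a set \<Rightarrow> ('a \<Rightarrow> 'a \<Rightarrow> bool) \<Rightarrow> 'a set \<Rightarrow> bool" where
  "minimal_dominating V E D \<longleftrightarrow> dominating V E D \<and> (\<forall>D'. D' \<subset> D \<longrightarrow> \<not> dominating V E D')"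

definition well_dominated :: "'a set \<Rightarrow> ('a \<Rightarrow> 'a \<Rightarrow> bool) \<Rightarrow> bool" where
  "well_dominated V E \<longleftrightarrow> (\<forall>D. minimal_dominating V E D \<longrightarrow>
      (\<forall>D'. dominating V E D' \<longrightarrow> card D \<le> card D'))"

definition strong_edge :: "('a \<Rightarrow> 'a \<Rightarrow> bool) \<Rightarrow> ('b \<Rightarrow> 'b \<Rightarrow> bool) \<Rightarrow> 'a \<times> 'b \<Rightarrow> 'a \<times> 'b \<Rightarrow> bool" where
  "strong_edge E1 E2 p q \<longleftrightarrow> p \<noteq> q \<and>
     ((fst p = fst q \<and> E2 (snd p) (snd q)) \<or>
      (snd p = snd q \<and> E1 (fst p) (fst q)) \<or>
      (E1 (fst p) (fst q) \<and> E2 (snd p) (snd q)))"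

end

theory Submission
  imports Defs
begin

lemma se_cn:
  assumes "strong_edge E1 E2 p q"
  shows "(fst p = fst q \<or> E1 (fst p) (fst q)) \<and> (snd p = snd q \<or> E2 (snd p) (snd q))"
  using assms unfolding strong_edge_def by auto

lemma prod_dom:
  assumes "dominating V1 E1 A" "dominating V2 E2 B"
  shows "dominating (V1 \<times> V2) (strong_edge E1 E2) (A \<times> B)"
  unfolding dominating_def
proof (intro conjI ballI)
  show "A \<times> B \<subseteq> V1 \<times> V2" using assms unfolding dominating_def by auto
next
  fix p assume p: "p \<in> V1 \<times> V2"
  obtain v w where vw: "p = (v, w)" by (cases p)
  have v: "v \<in> V1" "w \<in> V2" using p vw by auto
  obtain a where a: "a \<in> A" "v = a \<or> E1 v a" using assms(1) v unfolding dominating_def by blast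
  obtain b where b: "b \<in> B" "w = b \<or> E2 w b" using assms(2) v unfolding dominating_def by blast
  show "p \<in> A \<times> B \<or> (\<exists>u\<in>A \<times> B. strong_edge E1 E2 p u)"
  proof (cases "(v, w) = (a, b)")
    case True then show ?thesis using a b vw by auto
  next
    case False
    then have "strong_edge E1 E2 p (a, b)" using a b vw unfolding strong_edge_def by auto
    then show ?thesis using a b by blast
  qed
qed

lemma private_nb:
  assumes "minimal_dominating V E A" "a \<in> A"
  obtains x where "x \<in> V" "x = a \<or> E x a" "\<And>u. u \<in> A \<Longrightarrow> u \<noteq> a \<Longrightarrow> x \<noteq> u \<and> \<not> E x u"
proof -
  have dA: "dominating V E A" and nd: "\<not> dominating V E (A - {a})"
    using assms unfolding minimal_dominating_def by auto
  have sub: "A - {a} \<subseteq> V" using dA unfolding dominating_def by auto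
  then obtain x where x: "x \<in> V" "x \<notin> A - {a}" "\<not> (\<exists>u\<in>A - {a}. E x u)"
    using nd unfolding dominating_def by blast
  have "x = a \<or> E x a"
  proof (cases "x = a")
    case False
    then have "x \<notin> A" using x by auto
    then obtain u where "u \<in> A" "E x u" using dA x(1) unfolding dominating_def by blast
    then show ?thesis using x by auto
  qed simp
  then show ?thesis using that x by auto
qed

lemma prod_min:
  assumes "minimal_dominating V1 E1 A" "minimal_dominating V2 E2 B"
  shows "minimal_dominating (V1 \<times> V2) (strong_edge E1 E2) (A \<times> B)"
proof -
  have dA: "dominating V1 E1 A" and dB: "dominating V2 E2 B"
    using assms unfolding minimal_dominating_def by auto
  have "\<not> dominating (V1 \<times> V2) (strong_edge E1 E2) D'" if D': "D' \<subset> A \<times> B" for D'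
  proof
    assume dom: "dominating (V1 \<times> V2) (strong_edge E1 E2) D'"
    obtain a b where ab: "a \<in> A" "b \<in> B" "(a, b) \<notin> D'" using D' by auto
    obtain x where x: "x \<in> V1" "x = a \<or> E1 x a" "\<And>u. u \<in> A \<Longrightarrow> u \<noteq> a \<Longrightarrow> x \<noteq> u \<and> \<not> E1 x u"
      using private_nb[OF assms(1) ab(1)] by blast
    obtain y where y: "y \<in> V2" "y = b \<or> E2 y b" "\<And>u. u \<in> B \<Longrightarrow> u \<noteq> b \<Longrightarrow> y \<noteq> u \<and> \<not> E2 y u"
      using private_nb[OF assms(2) ab(2)] by blast
    have "(x, y) \<in> D' \<or> (\<exists>u\<in>D'. strong_edge E1 E2 (x, y) u)"
      using dom x(1) y(1) unfolding dominating_def by blast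
    then obtain q where q: "q \<in> D'" "fst q = x \<or> E1 x (fst q)" "snd q = y \<or> E2 y (snd q)"
      using se_cn[of E1 E2 "(x,y)"] by (metis fst_conv snd_conv)
    have "fst q \<in> A" "snd q \<in> B" using q(1) D' by (auto simp: mem_Times_iff)
    then have "fst q = a" "snd q = b" using x(3) y(3) q by blast+
    then have "q = (a, b)" by (cases q) auto
    then show False using q(1) ab(3) by simp
  qed
  then show ?thesis using prod_dom[OF dA dB] unfolding minimal_dominating_def by blast
qed

lemma exists_min:
  assumes "fin_simple_graph V E" "V \<noteq> {}"
  obtains B where "minimal_dominating V E B" "B \<noteq> {}" "finite B"
proof -
  have fin: "finite V" using assms unfolding fin_simple_graph_def by auto
  have "dominating V E V" unfolding dominating_def by auto
  then obtain B where B: "dominating V E B" "\<And>C. dominating V E C \<Longrightarrow> card B \<le> card C"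
    using ex_has_least_nat[of "dominating V E" V card] by blast
  have BV: "B \<subseteq> V" using B(1) unfolding dominating_def by auto
  then have finB: "finite B" using fin finite_subset by blast
  have "minimal_dominating V E B"
    unfolding minimal_dominating_def
  proof (intro conjI allI impI)
    fix D' assume "D' \<subset> B"
    then have "card D' < card B" using finB psubset_card_mono by blast
    then show "\<not> dominating V E D'" using B(2) by force
  qed (rule B(1))
  moreover have "B \<noteq> {}"
  proof
    assume "B = {}"
    then show False using B(1) assms(2) unfolding dominating_def by auto
  qed
  ultimately show ?thesis using that finB by blast
qed

theorem corollary7:
  fixes V1 :: "'a set" and E1 :: "'a \<Rightarrow> 'a \<Rightarrow> bool"
    and V2 :: "'b set" and E2 :: "'b \<Rightarrow> 'b \<Rightarrow> bool"
  assumes "fin_simple_graph V1 E1" and "fin_simple_graph V2 E2"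
    and "V1 \<noteq> {}" and "V2 \<noteq> {}"
    and "well_dominated (V1 \<times> V2) (strong_edge E1 E2)"
  shows "well_dominated V1 E1 \<and> well_dominated V2 E2"
proof
  have f1: "finite V1" and f2: "finite V2" using assms(1,2) unfolding fin_simple_graph_def by auto
  show "well_dominated V1 E1"
    unfolding well_dominated_def
  proof (intro allI impI)
    fix A A' assume A: "minimal_dominating V1 E1 A" and A': "dominating V1 E1 A'"
    obtain B where B: "minimal_dominating V2 E2 B" "B \<noteq> {}" "finite B"
      using exists_min[OF assms(2) assms(4)] by blast
    have dB: "dominating V2 E2 B" using B unfolding minimal_dominating_def by auto
    have "card (A \<times> B) \<le> card (A' \<times> B)"
      using assms(5) prod_min[OF A B(1)] prod_dom[OF A' dB] unfolding well_dominated_def by blast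
    then have "card A * card B \<le> card A' * card B" by (simp add: card_cartesian_product)
    moreover have "card B > 0" using B by (simp add: card_gt_0_iff)
    ultimately show "card A \<le> card A'" by simp
  qed
  show "well_dominated V2 E2"
    unfolding well_dominated_def
  proof (intro allI impI)
    fix B B' assume B: "minimal_dominating V2 E2 B" and B': "dominating V2 E2 B'"
    obtain A where A: "minimal_dominating V1 E1 A" "A \<noteq> {}" "finite A"
      using exists_min[OF assms(1) assms(3)] by blast
    have dA: "dominating V1 E1 A" using A unfolding minimal_dominating_def by auto
    have "card (A \<times> B) \<le> card (A \<times> B')"
      using assms(5) prod_min[OF A(1) B] prod_dom[OF dA B'] unfolding well_dominated_def by blast
    then have "card A * card B \<le> card A * card B'" by (simp add: card_cartesian_product)
    moreover have "card A > 0" using A by (simp add: card_gt_0_iff)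
    ultimately show "card B \<le> card B'" by simp
  qed
qed

end
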